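(* Let $E$ be a normed space over $\mathbb{K}\in\{\mathbb{R},\mathbb{C}\}$ and let $P:E\to\mathbb{K}$ be a polynomial on $E$ (not assumed continuous), i.e. $P=P_0+P_1+\cdots+P_n$ for some $n\in\mathbb{N}$, where $P_0$ is a constant function and each $P_k$ ($1\le k\le n$) is a $k$-homogeneous polynomial. Then $P$ is continuous if and only if $P(K)$ is compact for every compact set $K\subset E$.
   Context: A map $Q:E\to\mathbb{K}$ is a $k$-homogeneous polynomial if there is a symmetric $k$-linear mapping $L:E^k\to\mathbb{K}$ (not necessarily continuous) with $Q(x)=L(x,\ldots,x)$ for all $x\in E$. *)

theory Defs
  imports "HOL-Analysis.Analysis" "HOL-Combinatorics.Permutations"
begin

text \<open>Scalar field K with scalar multiplication sc on the space.
  A k-linear map is modelled as a function on lists of length k.\<close>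

definition multilinear_map ::
  "('k::field \<Rightarrow> 'v::ab_group_add \<Rightarrow> 'v) \<Rightarrow> nat \<Rightarrow> ('v list \<Rightarrow> 'k) \<Rightarrow> bool" where
  "multilinear_map sc k L \<longleftrightarrow>
     (\<forall>xs i a b u w. length xs = k \<longrightarrow> i < k \<longrightarrow>
        L (xs[i := sc a u + sc b w]) = a * L (xs[i := u]) + b * L (xs[i := w]))"

definition symmetric_map :: "nat \<Rightarrow> ('v list \<Rightarrow> 'k) \<Rightarrow> bool" where
  "symmetric_map k L \<longleftrightarrow>
     (\<forall>xs \<pi>. length xs = k \<longrightarrow> \<pi> permutes {..<k} \<longrightarrow>
        L (map (\<lambda>i. xs ! \<pi> i) [0..<k]) = L xs)"

definition homogeneous_poly ::
  "('k::field \<Rightarrow> 'v::ab_group_add \<Rightarrow> 'v) \<Rightarrow> nat \<Rightarrow> ('v \<Rightarrow> 'k) \<Rightarrow> bool" where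
  "homogeneous_poly sc k Q \<longleftrightarrow>
     (\<exists>L. multilinear_map sc k L \<and> symmetric_map k L \<and> (\<forall>x. Q x = L (replicate k x)))"

definition polynomial_map ::
  "('k::field \<Rightarrow> 'v::ab_group_add \<Rightarrow> 'v) \<Rightarrow> ('v \<Rightarrow> 'k) \<Rightarrow> bool" where
  "polynomial_map sc P \<longleftrightarrow>
     (\<exists>n Ps. (\<exists>c. \<forall>x. Ps 0 x = c) \<and> (\<forall>k\<in>{1..n}. homogeneous_poly sc k (Ps k)) \<and>
            (\<forall>x. P x = (\<Sum>k\<le>n. Ps k x)))"

text \<open>A complex normed space structure on a real normed vector space: complex scalar
  multiplication extending the real one, with homogeneous norm.\<close>
definition complex_normed_scale :: "(complex \<Rightarrow> 'v::real_normed_vector \<Rightarrow> 'v) \<Rightarrow> bool" where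
  "complex_normed_scale sc \<longleftrightarrow>
     module sc \<and> (\<forall>r x. sc (complex_of_real r) x = r *\<^sub>R x) \<and>
     (\<forall>c x. norm (sc c x) = cmod c * norm x)"

end

theory Submission
  imports Defs "HOL-Computational_Algebra.Polynomial"
begin

lemma ml_poly:
  fixes sc :: "'k::field \<Rightarrow> 'v::ab_group_add \<Rightarrow> 'v"
  assumes ml: "multilinear_map sc k L" and sc1: "\<forall>u. sc 1 u = u"
  shows "finite S \<Longrightarrow> S \<subseteq> {..<k} \<Longrightarrow> length us = k \<Longrightarrow>
    \<exists>p. degree p \<le> card S \<and>
      (\<forall>t. L (map (\<lambda>i. if i \<in> S then us!i + sc t (vs!i) else us!i) [0..<k]) = poly p t)"
proof (induction S arbitrary: us rule: finite_induct)
  case empty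
  have "map (\<lambda>i. us!i) [0..<k] = us" using empty map_nth by metis
  then show ?case by (intro exI[of _ "[:L us:]"]) simp
next
  case (insert i S)
  define lst where "lst us' t = map (\<lambda>j. if j \<in> S then us'!j + sc t (vs!j) else us'!j) [0..<k]" for us' t
  have ik: "i < k" using insert by auto
  from insert.IH[of us] insert.prems obtain p1 where p1: "degree p1 \<le> card S"
    "\<forall>t. L (lst us t) = poly p1 t" unfolding lst_def by auto
  from insert.IH[of "us[i := vs!i]"] insert.prems obtain p2 where p2: "degree p2 \<le> card S"
    "\<forall>t. L (lst (us[i := vs!i]) t) = poly p2 t" unfolding lst_def by auto
  have eq: "map (\<lambda>j. if j \<in> insert i S then us!j + sc t (vs!j) else us!j) [0..<k]
      = (lst us t)[i := sc 1 (us!i) + sc t (vs!i)]" for t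
    using ik insert.prems by (intro nth_equalityI) (auto simp: lst_def sc1 nth_list_update)
  have e1: "(lst us t)[i := us!i] = lst us t" for t
    using ik insert by (intro nth_equalityI) (auto simp: lst_def nth_list_update)
  have e2: "(lst us t)[i := vs!i] = lst (us[i := vs!i]) t" for t
    using ik insert by (intro nth_equalityI) (auto simp: lst_def nth_list_update)
  have len: "length (lst us t) = k" for t by (simp add: lst_def)
  have "L (map (\<lambda>j. if j \<in> insert i S then us!j + sc t (vs!j) else us!j) [0..<k])
     = poly (p1 + pCons 0 p2) t" for t
  proof -
    have "L ((lst us t)[i := sc 1 (us!i) + sc t (vs!i)])
        = 1 * L ((lst us t)[i := us!i]) + t * L ((lst us t)[i := vs!i])"
      using ml ik len unfolding multilinear_map_def by blast
    then show ?thesis using p1 p2 e1 e2 eq by simp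
  qed
  moreover have "degree (p1 + pCons 0 p2) \<le> card (insert i S)"
  proof -
    have "degree (pCons 0 p2) \<le> Suc (card S)" using p2(1) degree_pCons_le[of 0 p2] by linarith
    moreover have "card (insert i S) = Suc (card S)" using insert by simp
    ultimately show ?thesis using p1(1) degree_add_le by (metis le_SucI)
  qed
  ultimately show ?case by blast
qed


lemma hp_poly:
  fixes sc :: "'k::field \<Rightarrow> 'v::ab_group_add \<Rightarrow> 'v"
  assumes "homogeneous_poly sc k Q" and sc1: "\<forall>u. sc 1 u = u"
  shows "\<exists>p. degree p \<le> k \<and> (\<forall>t. Q (x + sc t z) = poly p t)"
proof -
  obtain L where ml: "multilinear_map sc k L" and Q: "\<forall>x. Q x = L (replicate k x)"
    using assms unfolding homogeneous_poly_def by blast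
  from ml_poly[OF ml sc1, of "{..<k}" "replicate k x" "replicate k z"]
  obtain p where p: "degree p \<le> k"
    "\<forall>t. L (map (\<lambda>i. if i \<in> {..<k} then replicate k x ! i + sc t (replicate k z ! i)
         else replicate k x ! i) [0..<k]) = poly p t" by auto
  have "map (\<lambda>i. if i \<in> {..<k} then replicate k x ! i + sc t (replicate k z ! i)
         else replicate k x ! i) [0..<k] = replicate k (x + sc t z)" for t
    by (intro nth_equalityI) auto
  then show ?thesis using p Q by (intro exI[of _ p]) auto
qed

lemma pm_poly:
  fixes sc :: "'k::field \<Rightarrow> 'v::ab_group_add \<Rightarrow> 'v"
  assumes "polynomial_map sc P" and sc1: "\<forall>u. sc 1 u = u"
  shows "\<exists>n. \<forall>x z. \<exists>p. degree p \<le> n \<and> (\<forall>t. P (x + sc t z) = poly p t)"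
proof -
  obtain n Ps c where c: "\<forall>x. Ps 0 x = c" and hp: "\<forall>k\<in>{1..n}. homogeneous_poly sc k (Ps k)"
    and P: "\<forall>x. P x = (\<Sum>k\<le>n. Ps k x)"
    using assms unfolding polynomial_map_def by blast
  have "\<exists>p. degree p \<le> n \<and> (\<forall>t. P (x + sc t z) = poly p t)" for x z
  proof -
    have "\<forall>k\<in>{..n}. \<exists>p. degree p \<le> n \<and> (\<forall>t. Ps k (x + sc t z) = poly p t)"
    proof
      fix k assume k: "k \<in> {..n}"
      show "\<exists>p. degree p \<le> n \<and> (\<forall>t. Ps k (x + sc t z) = poly p t)"
      proof (cases "k = 0")
        case True
        then show ?thesis using c by (intro exI[of _ "[:c:]"]) auto
      next
        case False
        then have "homogeneous_poly sc k (Ps k)" using hp k by auto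
        from hp_poly[OF this sc1] obtain p where "degree p \<le> k" "\<forall>t. Ps k (x + sc t z) = poly p t"
          by blast
        then show ?thesis using k by (intro exI[of _ p]) auto
      qed
    qed
    then obtain pf where pf: "\<forall>k\<in>{..n}. degree (pf k) \<le> n \<and> (\<forall>t. Ps k (x + sc t z) = poly (pf k) t)"
      by metis
    show ?thesis
    proof (intro exI[of _ "\<Sum>k\<le>n. pf k"] conjI allI)
      show "degree (\<Sum>k\<le>n. pf k) \<le> n" using pf by (intro degree_sum_le) auto
      fix t show "P (x + sc t z) = poly (\<Sum>k\<le>n. pf k) t" using pf P by (simp add: poly_sum)
    qed
  qed
  then show ?thesis by blast
qed

definition lam :: "nat \<Rightarrow> nat \<Rightarrow> 'k::field \<Rightarrow> 'k" where
  "lam n j s = (\<Prod>i\<in>{..n}-{j}. (s - of_nat i) / (of_nat j - of_nat i))"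

lemma lam_node:
  fixes k j n :: nat
  assumes "j \<le> n" "k \<le> n"
  shows "lam n j (of_nat k :: 'k::{field,ring_char_0}) = (if j = k then 1 else 0)"
proof (cases "j = k")
  case True
  have "lam n j (of_nat k :: 'k) = 1" unfolding lam_def using True by (intro prod.neutral) auto
  then show ?thesis using True by simp
next
  case False
  have "lam n j (of_nat k :: 'k) = 0" unfolding lam_def using assms False
    by (intro prod_zero) (auto intro!: bexI[of _ k])
  then show ?thesis using False by simp
qed

lemma lagrange:
  fixes p :: "'k::{field,ring_char_0} poly"
  assumes "degree p \<le> n"
  shows "poly p s = (\<Sum>j\<le>n. poly p (of_nat j) * lam n j s)"
proof -
  define q where "q = (\<Sum>j\<le>n. smult (poly p (of_nat j))
      (\<Prod>i\<in>{..n}-{j}. smult (inverse (of_nat j - of_nat i)) [:- of_nat i, 1:]))"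
  have pq: "poly q s = (\<Sum>j\<le>n. poly p (of_nat j) * lam n j s)" for s
    unfolding q_def lam_def by (simp add: poly_sum poly_prod divide_inverse algebra_simps)
  have dq: "degree q \<le> n"
    unfolding q_def
  proof (intro degree_sum_le finite_atMost)
    fix j assume j: "j \<in> {..n}"
    have "degree (\<Prod>i\<in>{..n}-{j}. smult (inverse (of_nat j - of_nat i :: 'k)) [:- of_nat i, 1:])
        \<le> (\<Sum>i\<in>{..n}-{j}. degree (smult (inverse (of_nat j - of_nat i :: 'k)) [:- of_nat i, 1:]))"
      by (rule degree_prod_sum_le[of "{..n}-{j}", unfolded comp_def]) simp
    also have "\<dots> \<le> (\<Sum>i\<in>{..n}-{j}. 1)"
      by (intro sum_mono order_trans[OF degree_smult_le]) simp
    also have "\<dots> \<le> n" using j by simp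
    finally show "degree (smult (poly p (of_nat j))
      (\<Prod>i\<in>{..n}-{j}. smult (inverse (of_nat j - of_nat i :: 'k)) [:- of_nat i, 1:])) \<le> n"
      using degree_smult_le order_trans by blast
  qed
  have "p = q"
  proof (rule poly_eqI_degree[of "of_nat ` {..n}"])
    fix x assume "x \<in> (of_nat ` {..n} :: 'k set)"
    then obtain k where k: "k \<le> n" "x = of_nat k" by auto
    have "poly q x = (\<Sum>j\<le>n. poly p (of_nat j) * lam n j (of_nat k))"
      using pq k by simp
    also have "\<dots> = (\<Sum>j\<le>n. poly p (of_nat j) * (if j = k then 1 else 0))"
    proof (rule sum.cong[OF refl])
      fix j assume "j \<in> {..n}"
      then show "poly p (of_nat j) * lam n j (of_nat k) = poly p (of_nat j) * (if j = k then 1 else 0)"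
        using lam_node[of j n k, where 'k='k] k(1) by simp
    qed
    also have "\<dots> = (\<Sum>j\<le>n. if j = k then poly p (of_nat k) else 0)"
      by (rule sum.cong[OF refl]) simp
    also have "\<dots> = poly p x" using k by simp
    finally show "poly p x = poly q x" by simp
  next
    have "card (of_nat ` {..n} :: 'k set) = Suc n"
      by (subst card_image) (auto simp: inj_on_def)
    then show "degree p < card (of_nat ` {..n} :: 'k set)" "degree q < card (of_nat ` {..n} :: 'k set)"
      using assms dq by auto
  qed
  then show ?thesis using pq[of s] by (simp only:)
qed

lemma compact_seq_lim:
  fixes f :: "nat \<Rightarrow> 'a::topological_space"
  assumes "f \<longlonglongrightarrow> l"
  shows "compact (insert l (range f))"
proof (rule compactI)
  fix C assume C: "\<forall>t\<in>C. open t" "insert l (range f) \<subseteq> \<Union>C"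
  then obtain U where U: "U \<in> C" "l \<in> U" by auto
  have "eventually (\<lambda>n. f n \<in> U) sequentially"
    using assms C U by (metis topological_tendstoD)
  then obtain N where N: "\<forall>n\<ge>N. f n \<in> U" by (auto simp: eventually_sequentially)
  have "\<forall>n. \<exists>V\<in>C. f n \<in> V" using C(2) by blast
  then obtain V where V: "\<forall>n. V n \<in> C \<and> f n \<in> V n" by metis
  show "\<exists>C'\<subseteq>C. finite C' \<and> insert l (range f) \<subseteq> \<Union>C'"
  proof (intro exI[of _ "insert U (V ` {..<N})"] conjI)
    show "insert l (range f) \<subseteq> \<Union>(insert U (V ` {..<N}))"
    proof
      fix y assume "y \<in> insert l (range f)"
      then consider "y = l" | n where "y = f n" by auto
      then show "y \<in> \<Union>(insert U (V ` {..<N}))"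
      proof cases
        case (2 n) then show ?thesis using N V by (cases "n < N") (auto simp: not_less)
      qed (use U in auto)
    qed
  qed (use U V in auto)
qed


lemma main_cont:
  fixes sc :: "'k::real_normed_field \<Rightarrow> 'v::real_normed_vector \<Rightarrow> 'v" and P :: "'v \<Rightarrow> 'k"
  assumes sc_of_real: "\<And>r u. sc (of_real r) u = r *\<^sub>R u"
    and sc_norm: "\<And>c u. norm (sc c u) = norm c * norm u"
    and pm: "polynomial_map sc P"
    and cpt: "\<And>K. compact K \<Longrightarrow> compact (P ` K)"
  shows "continuous_on UNIV P"
proof -
  have sc1: "\<forall>u. sc 1 u = u" using sc_of_real[of 1] by simp
  have sc0: "\<And>u. sc 0 u = 0" using sc_of_real[of 0] by simp
  obtain n where polyP: "\<And>x z. \<exists>p. degree p \<le> n \<and> (\<forall>t. P (x + sc t z) = poly p t)"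
    using pm_poly[OF pm sc1] by blast
  show ?thesis
  proof (rule continuous_at_imp_continuous_on, intro ballI continuous_at_sequentiallyI)
    fix x :: 'v and u :: "nat \<Rightarrow> 'v" assume u: "u \<longlonglongrightarrow> x"
    define w where "w m = u m - x" for m
    define e where "e m = sqrt (norm (w m))" for m
    define z where "z m = inverse (e m) *\<^sub>R w m" for m
    have w0: "w \<longlonglongrightarrow> 0" using LIM_zero[OF u] unfolding w_def .
    have e0: "e \<longlonglongrightarrow> 0" unfolding e_def using tendsto_real_sqrt[OF tendsto_norm_zero[OF w0]] by simp
    have nz: "norm (z m) = e m" for m
    proof (cases "w m = 0")
      case True then show ?thesis by (simp add: z_def e_def)
    next
      case False
      have "norm (z m) = norm (w m) / sqrt (norm (w m))"
        by (simp add: z_def e_def divide_inverse mult.commute)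
      also have "\<dots> = e m" unfolding e_def by (rule real_div_sqrt) simp
      finally show ?thesis .
    qed
    have "(\<lambda>m. norm (z m)) \<longlonglongrightarrow> 0" using e0 nz by simp
    then have z0: "z \<longlonglongrightarrow> 0" using tendsto_norm_zero_iff by blast
    have ueq: "u m = x + sc (of_real (e m)) (z m)" for m
    proof (cases "e m = 0")
      case True
      then have "w m = 0" by (simp add: e_def)
      then show ?thesis using True by (simp add: sc0 w_def z_def)
    next
      case False
      then show ?thesis by (simp add: sc_of_real w_def z_def)
    qed
    have "\<forall>m. \<exists>q. degree q \<le> n \<and> (\<forall>t. P (x + sc t (z m)) = poly q t)" using polyP by blast
    then obtain p where p: "\<And>m. degree (p m) \<le> n" "\<And>m t. P (x + sc t (z m)) = poly (p m) t"
      by metis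
    define Kc where "Kc = (\<Union>j\<in>{..n}. insert x (range (\<lambda>m. x + sc (of_nat j) (z m))))"
    have "compact Kc" unfolding Kc_def
    proof (intro compact_UN finite_atMost compact_seq_lim)
      fix j
      have "(\<lambda>m. norm (of_nat j :: 'k) * norm (z m)) \<longlonglongrightarrow> 0"
        by (intro tendsto_mult_right_zero tendsto_norm_zero z0)
      then have "(\<lambda>m. norm (sc (of_nat j) (z m))) \<longlonglongrightarrow> 0" by (simp add: sc_norm)
      then have "(\<lambda>m. sc (of_nat j) (z m)) \<longlonglongrightarrow> 0" using tendsto_norm_zero_iff by blast
      from tendsto_add[OF tendsto_const[of x] this]
      show "(\<lambda>m. x + sc (of_nat j) (z m)) \<longlonglongrightarrow> x" by simp
    qed
    then have "bounded (P ` Kc)" using cpt compact_imp_bounded by blast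
    then obtain M where M: "\<And>y. y \<in> P ` Kc \<Longrightarrow> norm y \<le> M" by (auto simp: bounded_iff)
    have Mb: "norm (poly (p m) (of_nat j)) \<le> M" if "j \<le> n" for j m
    proof -
      have "x + sc (of_nat j) (z m) \<in> Kc" unfolding Kc_def using that by blast
      then show ?thesis using M p(2) by (metis image_eqI)
    qed
    have diff: "P (u m) - P x = (\<Sum>j\<le>n. poly (p m) (of_nat j) * (lam n j (of_real (e m)) - lam n j 0))" for m
    proof -
      have "P (u m) = poly (p m) (of_real (e m))" using ueq p(2) by simp
      also have "\<dots> = (\<Sum>j\<le>n. poly (p m) (of_nat j) * lam n j (of_real (e m)))"
        by (rule lagrange[OF p(1)])
      finally have a: "P (u m) = (\<Sum>j\<le>n. poly (p m) (of_nat j) * lam n j (of_real (e m)))" .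
      have "P x = P (x + sc 0 (z m))" using sc0 by simp
      also have "\<dots> = poly (p m) 0" using p(2) by simp
      also have "\<dots> = (\<Sum>j\<le>n. poly (p m) (of_nat j) * lam n j 0)"
        by (rule lagrange[OF p(1)])
      finally have b: "P x = (\<Sum>j\<le>n. poly (p m) (of_nat j) * lam n j 0)" .
      show ?thesis unfolding a b by (simp add: sum_subtractf right_diff_distrib)
    qed
    define g where "g m = (\<Sum>j\<le>n. M * norm (lam n j (of_real (e m)) - lam n j (0::'k)))" for m
    have "(\<lambda>m. P (u m) - P x) \<longlonglongrightarrow> 0"
    proof (rule Lim_null_comparison)
      show "\<forall>\<^sub>F m in sequentially. norm (P (u m) - P x) \<le> g m"
      proof (intro always_eventually allI)
        fix m
        have "norm (P (u m) - P x) \<le> (\<Sum>j\<le>n. norm (poly (p m) (of_nat j) * (lam n j (of_real (e m)) - lam n j 0)))"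
          unfolding diff by (rule norm_sum)
        also have "\<dots> \<le> g m" unfolding g_def
          by (intro sum_mono) (simp add: norm_mult mult_right_mono Mb)
        finally show "norm (P (u m) - P x) \<le> g m" .
      qed
      have lt: "(\<lambda>m. lam n j (of_real (e m)) :: 'k) \<longlonglongrightarrow> lam n j (of_real 0)" for j
        unfolding lam_def
        by (intro tendsto_prod tendsto_divide tendsto_diff tendsto_of_real e0 tendsto_const) auto
      have "g \<longlonglongrightarrow> (\<Sum>j\<le>n. M * norm (lam n j (of_real 0) - lam n j (0::'k)))"
        unfolding g_def by (intro tendsto_sum tendsto_mult tendsto_const tendsto_norm tendsto_diff lt)
      then show "g \<longlonglongrightarrow> 0" by simp
    qed
    then show "(\<lambda>m. P (u m)) \<longlonglongrightarrow> P x" by (simp add: LIM_zero_iff)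
  qed
qed


theorem theorem2p1:
  shows "(\<forall>P :: 'a::real_normed_vector \<Rightarrow> real. polynomial_map scaleR P \<longrightarrow>
            (continuous_on UNIV P \<longleftrightarrow> (\<forall>K. compact K \<longrightarrow> compact (P ` K)))) \<and>
         (\<forall>(sc :: complex \<Rightarrow> 'b::real_normed_vector \<Rightarrow> 'b) (P :: 'b \<Rightarrow> complex).
            complex_normed_scale sc \<longrightarrow> polynomial_map sc P \<longrightarrow>
            (continuous_on UNIV P \<longleftrightarrow> (\<forall>K. compact K \<longrightarrow> compact (P ` K))))"
proof (intro conjI allI impI)
  fix P :: "'a \<Rightarrow> real"
  assume pm: "polynomial_map scaleR P"
  show "continuous_on UNIV P \<longleftrightarrow> (\<forall>K. compact K \<longrightarrow> compact (P ` K))"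
  proof
    assume "continuous_on UNIV P"
    then show "\<forall>K. compact K \<longrightarrow> compact (P ` K)"
      using compact_continuous_image continuous_on_subset by blast
  next
    assume c: "\<forall>K. compact K \<longrightarrow> compact (P ` K)"
    show "continuous_on UNIV P"
      by (rule main_cont[OF _ _ pm]) (use c in auto)
  qed
next
  fix sc :: "complex \<Rightarrow> 'b \<Rightarrow> 'b" and P :: "'b \<Rightarrow> complex"
  assume cs: "complex_normed_scale sc" and pm: "polynomial_map sc P"
  show "continuous_on UNIV P \<longleftrightarrow> (\<forall>K. compact K \<longrightarrow> compact (P ` K))"
  proof
    assume "continuous_on UNIV P"
    then show "\<forall>K. compact K \<longrightarrow> compact (P ` K)"
      using compact_continuous_image continuous_on_subset by blast
  next
    assume c: "\<forall>K. compact K \<longrightarrow> compact (P ` K)"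
    show "continuous_on UNIV P"
      by (rule main_cont[OF _ _ pm]) (use c cs in \<open>auto simp: complex_normed_scale_def\<close>)
  qed
qed

end
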